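(* Let $M$ be an $L$-structure, $G$ a group definable in $M$, and assume every complete type in $S_{G}(M)$ is definable. Then $(S_{G}(M),G,\mathrm{tp}(1/M))$, with the action $g\cdot\mathrm{tp}(a/M)=\mathrm{tp}(ga/M)$ and distinguished point the type of the identity $1$ of $G$, is the unique universal definable $G$-ambit: for any definable $G$-ambit $(X,G,x_{0})$ there is a unique continuous $G$-equivariant map $h\colon S_{G}(M)\to X$ with $h(\mathrm{tp}(1/M))=x_{0}$, and this map is necessarily surjective.
   Context: $M^{*}$ is a $\kappa$-saturated elementary extension of $M$ with $\kappa>2^{|M|+|L|}$ and $G^{*}$ the interpretation of $G$ in it; $S_{G}(M)$ is the Stone space of complete types over $M$ containing the formula defining $G$ (elements $g\in G$ are identified with the realized types $\mathrm{tp}(g/M)$). A type $p\in S(M)$ is definable if for every $L$-formula $\varphi(x,y)$, $\{b\in M:\varphi(x,b)\in p\}$ is definable in $M$. For a compact Hausdorff space $C$, a map $f\colon G\to C$ is definable if for any disjoint closed $C_{1},C_{2}\subseteq C$ there is a set $Y'\subseteq G$ definable in $M$ (with parameters) with $f^{-1}(C_{1})\subseteq Y'$ and $Y'\cap f^{-1}(C_{2})=\emptyset$. A definable $G$-flow is a compact Hausdorff space $X$ with an action of $G$ by homeomorphisms such that for each $x\in X$ the map $g\mapsto g\cdot x$ from $G$ to $X$ is definable. A definable $G$-ambit $(X,G,x_{0})$ is a definable $G$-flow with a point $x_{0}\in X$ whose orbit $G\cdot x_{0}$ is dense in $X$. *)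

theory Defs
  imports "HOL-Analysis.Analysis" "HOL-Algebra.Group"
begin

text \<open>An L-structure M is given by its universe (the whole type 'm), an interpretation
  FI of the function symbols and RI of the relation symbols (applied to argument lists).\<close>

datatype 'f trm = Var nat | Fn 'f "'f trm list"

datatype ('f, 'r) fm =
    FFalse
  | Eq "'f trm" "'f trm"
  | Rel 'r "'f trm list"
  | Neg "('f, 'r) fm"
  | Conj "('f, 'r) fm" "('f, 'r) fm"
  | Exi nat "('f, 'r) fm"

primrec evalt :: "('f \<Rightarrow> 'm list \<Rightarrow> 'm) \<Rightarrow> (nat \<Rightarrow> 'm) \<Rightarrow> 'f trm \<Rightarrow> 'm" where
  "evalt FI v (Var n) = v n"
| "evalt FI v (Fn f ts) = FI f (map (evalt FI v) ts)"

primrec fvt :: "'f trm \<Rightarrow> nat set" where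
  "fvt (Var n) = {n}"
| "fvt (Fn f ts) = \<Union> (set (map fvt ts))"

primrec sat :: "('f \<Rightarrow> 'm list \<Rightarrow> 'm) \<Rightarrow> ('r \<Rightarrow> 'm list \<Rightarrow> bool) \<Rightarrow> (nat \<Rightarrow> 'm)
                \<Rightarrow> ('f, 'r) fm \<Rightarrow> bool" where
  "sat FI RI v FFalse = False"
| "sat FI RI v (Eq s t) = (evalt FI v s = evalt FI v t)"
| "sat FI RI v (Rel r ts) = RI r (map (evalt FI v) ts)"
| "sat FI RI v (Neg \<phi>) = (\<not> sat FI RI v \<phi>)"
| "sat FI RI v (Conj \<phi> \<psi>) = (sat FI RI v \<phi> \<and> sat FI RI v \<psi>)"
| "sat FI RI v (Exi n \<phi>) = (\<exists>a. sat FI RI (v(n := a)) \<phi>)"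

primrec fv :: "('f, 'r) fm \<Rightarrow> nat set" where
  "fv FFalse = {}"
| "fv (Eq s t) = fvt s \<union> fvt t"
| "fv (Rel r ts) = \<Union> (set (map fvt ts))"
| "fv (Neg \<phi>) = fv \<phi>"
| "fv (Conj \<phi> \<psi>) = fv \<phi> \<union> fv \<psi>"
| "fv (Exi n \<phi>) = fv \<phi> - {n}"

text \<open>Tuples of M^n are lists of length n; the tuple a is the assignment i \<mapsto> a!i.
  A subset D of M^n is definable in M (with parameters) if it is defined by an L-formula
  phi(x_0..x_{n-1}, y_0..y_{m-1}) with a parameter tuple b \<in> M^m plugged in for y.\<close>

definition definable_set ::
  "('f \<Rightarrow> 'm list \<Rightarrow> 'm) \<Rightarrow> ('r \<Rightarrow> 'm list \<Rightarrow> bool) \<Rightarrow> nat \<Rightarrow> 'm list set \<Rightarrow> bool" where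
  "definable_set FI RI n D \<longleftrightarrow>
     (\<exists>(\<phi>::('f,'r) fm) b. fv \<phi> \<subseteq> {..<n + length b} \<and>
        D = {a. length a = n \<and> sat FI RI (\<lambda>i. (a @ b) ! i) \<phi>})"

text \<open>Definable (with parameters) subsets of the definable set G \<subseteq> M^k,
  i.e. the Boolean algebra of L(M)-formulas implying "x \<in> G", modulo equivalence in M.\<close>

definition def_subsets ::
  "('f \<Rightarrow> 'm list \<Rightarrow> 'm) \<Rightarrow> ('r \<Rightarrow> 'm list \<Rightarrow> bool) \<Rightarrow> nat \<Rightarrow> 'm list set \<Rightarrow> 'm list set set" where
  "def_subsets FI RI k G = {D. D \<subseteq> G \<and> definable_set FI RI k D}"

text \<open>Complete types over M containing the formula defining G, represented (Stone duality)
  as ultrafilters of the Boolean algebra of M-definable subsets of G: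
  p corresponds to the set of sets defined by the formulas of the type.\<close>

definition SG ::
  "('f \<Rightarrow> 'm list \<Rightarrow> 'm) \<Rightarrow> ('r \<Rightarrow> 'm list \<Rightarrow> bool) \<Rightarrow> nat \<Rightarrow> 'm list set \<Rightarrow> 'm list set set set" where
  "SG FI RI k G = {p. p \<subseteq> def_subsets FI RI k G \<and> G \<in> p \<and> {} \<notin> p
      \<and> (\<forall>D\<in>p. \<forall>E\<in>p. D \<inter> E \<in> p)
      \<and> (\<forall>D\<in>p. \<forall>E\<in>def_subsets FI RI k G. D \<subseteq> E \<longrightarrow> E \<in> p)
      \<and> (\<forall>D\<in>def_subsets FI RI k G. D \<in> p \<or> G - D \<in> p)}"

definition SG_top ::
  "('f \<Rightarrow> 'm list \<Rightarrow> 'm) \<Rightarrow> ('r \<Rightarrow> 'm list \<Rightarrow> bool) \<Rightarrow> nat \<Rightarrow> 'm list set \<Rightarrow> 'm list set set topology" where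
  "SG_top FI RI k G = topology_generated_by
     ((\<lambda>D. {p \<in> SG FI RI k G. D \<in> p}) ` def_subsets FI RI k G)"

definition tp ::
  "('f \<Rightarrow> 'm list \<Rightarrow> 'm) \<Rightarrow> ('r \<Rightarrow> 'm list \<Rightarrow> bool) \<Rightarrow> nat \<Rightarrow> 'm list set \<Rightarrow> 'm list \<Rightarrow> 'm list set set" where
  "tp FI RI k G a = {D \<in> def_subsets FI RI k G. a \<in> D}"

text \<open>The action g \<cdot> tp(a/M) = tp(ga/M): phi(x) \<in> g \<cdot> p iff phi(g x) \<in> p.\<close>

definition type_act ::
  "('f \<Rightarrow> 'm list \<Rightarrow> 'm) \<Rightarrow> ('r \<Rightarrow> 'm list \<Rightarrow> bool) \<Rightarrow> nat \<Rightarrow> ('m list, 'z) monoid_scheme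
     \<Rightarrow> 'm list \<Rightarrow> 'm list set set \<Rightarrow> 'm list set set" where
  "type_act FI RI k Gr g p =
     {D \<in> def_subsets FI RI k (carrier Gr). {x \<in> carrier Gr. g \<otimes>\<^bsub>Gr\<^esub> x \<in> D} \<in> p}"

text \<open>A type p \<in> S_G(M) is definable: for every L-formula phi(x,y) (x of length k,
  y of length m) the set {b \<in> M^m. phi(x,b) \<in> p} is definable in M.  Here
  phi(x,b) \<in> p iff the set it defines inside G belongs to p.\<close>

definition type_definable ::
  "('f \<Rightarrow> 'm list \<Rightarrow> 'm) \<Rightarrow> ('r \<Rightarrow> 'm list \<Rightarrow> bool) \<Rightarrow> nat \<Rightarrow> 'm list set \<Rightarrow> 'm list set set \<Rightarrow> bool" where
  "type_definable FI RI k G p \<longleftrightarrow>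
     (\<forall>(\<phi>::('f,'r) fm) m. fv \<phi> \<subseteq> {..<k + m} \<longrightarrow>
        definable_set FI RI m
          {b. length b = m \<and> {a \<in> G. sat FI RI (\<lambda>i. (a @ b) ! i) \<phi>} \<in> p})"

definition definable_map ::
  "('f \<Rightarrow> 'm list \<Rightarrow> 'm) \<Rightarrow> ('r \<Rightarrow> 'm list \<Rightarrow> bool) \<Rightarrow> nat \<Rightarrow> 'm list set
     \<Rightarrow> 'c topology \<Rightarrow> ('m list \<Rightarrow> 'c) \<Rightarrow> bool" where
  "definable_map FI RI k G C f \<longleftrightarrow>
     (\<forall>C1 C2. closedin C C1 \<and> closedin C C2 \<and> C1 \<inter> C2 = {} \<longrightarrow>
        (\<exists>Y. Y \<subseteq> G \<and> definable_set FI RI k Y \<and>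
             {g \<in> G. f g \<in> C1} \<subseteq> Y \<and> Y \<inter> {g \<in> G. f g \<in> C2} = {}))"

definition definable_flow ::
  "('f \<Rightarrow> 'm list \<Rightarrow> 'm) \<Rightarrow> ('r \<Rightarrow> 'm list \<Rightarrow> bool) \<Rightarrow> nat \<Rightarrow> ('m list, 'z) monoid_scheme
     \<Rightarrow> 'x topology \<Rightarrow> ('m list \<Rightarrow> 'x \<Rightarrow> 'x) \<Rightarrow> bool" where
  "definable_flow FI RI k Gr X act \<longleftrightarrow>
     compact_space X \<and> Hausdorff_space X
     \<and> (\<forall>g\<in>carrier Gr. homeomorphic_map X X (act g))
     \<and> (\<forall>x\<in>topspace X. act \<one>\<^bsub>Gr\<^esub> x = x)
     \<and> (\<forall>g\<in>carrier Gr. \<forall>h\<in>carrier Gr. \<forall>x\<in>topspace X.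
            act (g \<otimes>\<^bsub>Gr\<^esub> h) x = act g (act h x))
     \<and> (\<forall>x\<in>topspace X. definable_map FI RI k (carrier Gr) X (\<lambda>g. act g x))"

definition definable_ambit ::
  "('f \<Rightarrow> 'm list \<Rightarrow> 'm) \<Rightarrow> ('r \<Rightarrow> 'm list \<Rightarrow> bool) \<Rightarrow> nat \<Rightarrow> ('m list, 'z) monoid_scheme
     \<Rightarrow> 'x topology \<Rightarrow> ('m list \<Rightarrow> 'x \<Rightarrow> 'x) \<Rightarrow> 'x \<Rightarrow> bool" where
  "definable_ambit FI RI k Gr X act x0 \<longleftrightarrow>
     definable_flow FI RI k Gr X act \<and> x0 \<in> topspace X
     \<and> X closure_of ((\<lambda>g. act g x0) ` carrier Gr) = topspace X"

definition definable_group ::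
  "('f \<Rightarrow> 'm list \<Rightarrow> 'm) \<Rightarrow> ('r \<Rightarrow> 'm list \<Rightarrow> bool) \<Rightarrow> nat \<Rightarrow> ('m list, 'z) monoid_scheme \<Rightarrow> bool" where
  "definable_group FI RI k Gr \<longleftrightarrow>
     group Gr \<and> definable_set FI RI k (carrier Gr)
     \<and> definable_set FI RI (3 * k)
          {a @ b @ c | a b c. a \<in> carrier Gr \<and> b \<in> carrier Gr \<and> c = a \<otimes>\<^bsub>Gr\<^esub> b}"

end

theory Submission
  imports Defs
begin


lemma finite_fvt: "finite (fvt t)"
  by (induct t) auto

lemma finite_fv: "finite (fv \<phi>)"
  by (induct \<phi>) (auto simp: finite_fvt)

lemma evalt_cong: "(\<forall>i\<in>fvt t. v i = v' i) \<Longrightarrow> evalt FI v t = evalt FI v' t"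
proof (induct t)
  case (Fn f ts)
  then have "map (evalt FI v) ts = map (evalt FI v') ts" by (auto simp: map_eq_conv)
  then show ?case by (simp del: map_eq_conv)
qed auto

lemma sat_cong: "(\<forall>i\<in>fv \<phi>. v i = v' i) \<Longrightarrow> sat FI RI v \<phi> = sat FI RI v' \<phi>"
proof (induct \<phi> arbitrary: v v')
  case (Eq s t) then show ?case using evalt_cong[of s v v' FI] evalt_cong[of t v v' FI] by auto
next
  case (Rel r ts)
  have "map (evalt FI v) ts = map (evalt FI v') ts"
    using Rel by (auto simp: map_eq_conv intro!: evalt_cong)
  then show ?case by (simp del: map_eq_conv)
next
  case (Exi n \<phi>)
  have "\<And>a. sat FI RI (v(n:=a)) \<phi> = sat FI RI (v'(n:=a)) \<phi>"
    by (rule Exi(1)) (use Exi(2) in auto)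
  then show ?case by simp
next
  case (Conj \<phi> \<psi>)
  have "sat FI RI v \<phi> = sat FI RI v' \<phi>" by (rule Conj(1)) (use Conj(3) in auto)
  moreover have "sat FI RI v \<psi> = sat FI RI v' \<psi>" by (rule Conj(2)) (use Conj(3) in auto)
  ultimately show ?case by simp
next
  case (Neg \<phi>) then show ?case using Neg(1)[of v v'] by auto
qed auto

primrec rnt :: "(nat \<Rightarrow> nat) \<Rightarrow> 'f trm \<Rightarrow> 'f trm" where
  "rnt \<sigma> (Var n) = Var (\<sigma> n)"
| "rnt \<sigma> (Fn f ts) = Fn f (map (rnt \<sigma>) ts)"

lemma evalt_rnt: "evalt FI v (rnt \<sigma> t) = evalt FI (v \<circ> \<sigma>) t"
proof (induct t)
  case (Fn f ts)
  then have "map (evalt FI v \<circ> rnt \<sigma>) ts = map (evalt FI (v \<circ> \<sigma>)) ts" by (auto simp: map_eq_conv comp_def)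
  then show ?case by (simp del: map_eq_conv add: comp_def)
qed auto

lemma fvt_rnt: "fvt (rnt \<sigma> t) = \<sigma> ` fvt t"
  by (induct t) auto

primrec rn :: "(nat \<Rightarrow> nat) \<Rightarrow> ('f,'r) fm \<Rightarrow> ('f,'r) fm" where
  "rn \<sigma> FFalse = FFalse"
| "rn \<sigma> (Eq s t) = Eq (rnt \<sigma> s) (rnt \<sigma> t)"
| "rn \<sigma> (Rel r ts) = Rel r (map (rnt \<sigma>) ts)"
| "rn \<sigma> (Neg \<phi>) = Neg (rn \<sigma> \<phi>)"
| "rn \<sigma> (Conj \<phi> \<psi>) = Conj (rn \<sigma> \<phi>) (rn \<sigma> \<psi>)"
| "rn \<sigma> (Exi n \<phi>) = Exi (Suc (Max (insert 0 (\<sigma> ` fv \<phi>))))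
      (rn (\<sigma>(n := Suc (Max (insert 0 (\<sigma> ` fv \<phi>))))) \<phi>)"

lemma sat_rn: "sat FI RI v (rn \<sigma> \<phi>) = sat FI RI (v \<circ> \<sigma>) \<phi>"
proof (induct \<phi> arbitrary: \<sigma> v)
  case (Rel r ts)
  then show ?case by (simp add: evalt_rnt comp_def)
next
  case (Exi n \<phi>)
  define n' where "n' = Suc (Max (insert 0 (\<sigma> ` fv \<phi>)))"
  have big: "\<And>i. i \<in> fv \<phi> \<Longrightarrow> \<sigma> i < n'"
    unfolding n'_def using finite_fv[of \<phi>] by (simp add: le_imp_less_Suc)
  have c: "\<And>a. sat FI RI (v(n' := a) \<circ> \<sigma>(n := n')) \<phi> = sat FI RI ((v \<circ> \<sigma>)(n := a)) \<phi>"
    by (rule sat_cong) (auto dest: big)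
  have "sat FI RI v (rn \<sigma> (Exi n \<phi>)) = (\<exists>a. sat FI RI (v(n':=a)) (rn (\<sigma>(n:=n')) \<phi>))"
    by (simp add: n'_def)
  also have "\<dots> = (\<exists>a. sat FI RI (v(n':=a) \<circ> \<sigma>(n:=n')) \<phi>)"
    by (simp only: Exi(1))
  also have "\<dots> = (\<exists>a. sat FI RI ((v \<circ> \<sigma>)(n:=a)) \<phi>)"
    by (simp only: c)
  finally show ?case by (simp add: comp_def)
qed (auto simp: evalt_rnt)

lemma fv_rn: "fv (rn \<sigma> \<phi>) \<subseteq> \<sigma> ` fv \<phi>"
proof (induct \<phi> arbitrary: \<sigma>)
  case (Eq s t) then show ?case by (auto simp: fvt_rnt)
next
  case (Rel r ts) then show ?case by (auto simp: fvt_rnt)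
next
  case (Exi n \<phi>)
  define n' where "n' = Suc (Max (insert 0 (\<sigma> ` fv \<phi>)))"
  have i: "fv (rn (\<sigma>(n := n')) \<phi>) \<subseteq> (\<sigma>(n := n')) ` fv \<phi>" by (rule Exi)
  have "(\<sigma>(n := n')) ` fv \<phi> - {n'} \<subseteq> \<sigma> ` (fv \<phi> - {n})" by auto
  then have "fv (rn (\<sigma>(n := n')) \<phi>) - {n'} \<subseteq> \<sigma> ` (fv \<phi> - {n})" using i by blast
  then show ?case by (simp add: n'_def[symmetric])
next
  case (Conj \<phi> \<psi>)
  have "fv (rn \<sigma> \<phi>) \<subseteq> \<sigma> ` fv \<phi>" "fv (rn \<sigma> \<psi>) \<subseteq> \<sigma> ` fv \<psi>" by (fact Conj(1), fact Conj(2))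
  then show ?case by auto
qed auto

definition exis :: "nat list \<Rightarrow> ('f,'r) fm \<Rightarrow> ('f,'r) fm" where
  "exis is \<phi> = foldr Exi is \<phi>"

lemma sat_exis: "sat FI RI v (exis is \<phi>) \<longleftrightarrow>
   (\<exists>f. sat FI RI (\<lambda>j. if j \<in> set is then f j else v j) \<phi>)"
proof (induct "is" arbitrary: v)
  case Nil then show ?case by (simp add: exis_def)
next
  case (Cons i "is")
  have e: "exis (i # is) \<phi> = Exi i (exis is \<phi>)" by (simp add: exis_def)
  show ?case
  proof
    assume "sat FI RI v (exis (i # is) \<phi>)"
    then obtain a f where "sat FI RI (\<lambda>j. if j \<in> set is then f j else (v(i:=a)) j) \<phi>"
      using Cons by (auto simp: e)
    moreover have "(\<lambda>j. if j \<in> set is then f j else (v(i:=a)) j) =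
        (\<lambda>j. if j \<in> set (i#is) then (\<lambda>j. if j \<in> set is then f j else a) j else v j)"
      by auto
    ultimately show "\<exists>f. sat FI RI (\<lambda>j. if j \<in> set (i # is) then f j else v j) \<phi>" by metis
  next
    assume "\<exists>f. sat FI RI (\<lambda>j. if j \<in> set (i # is) then f j else v j) \<phi>"
    then obtain f where f: "sat FI RI (\<lambda>j. if j \<in> set (i # is) then f j else v j) \<phi>" by blast
    have "(\<lambda>j. if j \<in> set (i#is) then f j else v j) =
        (\<lambda>j. if j \<in> set is then f j else (v(i:=f i)) j)"
      by auto
    then have "sat FI RI (v(i := f i)) (exis is \<phi>)" using Cons f by metis
    then show "sat FI RI v (exis (i # is) \<phi>)" by (auto simp: e)
  qed
qed

lemma fv_exis: "fv (exis is \<phi>) = fv \<phi> - set is"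
  by (induct "is") (auto simp: exis_def)




lemma def_set_len: "definable_set FI RI n D \<Longrightarrow> a \<in> D \<Longrightarrow> length a = n"
  unfolding definable_set_def by auto

lemma def_set_fix:
  assumes "definable_set FI RI (n + m) S" "length c = m"
  shows "definable_set FI RI n {a. length a = n \<and> a @ c \<in> S}"
proof -
  obtain \<theta> e where fe: "fv \<theta> \<subseteq> {..<n + m + length e}"
    and S: "S = {b. length b = n + m \<and> sat FI RI (\<lambda>i. (b @ e) ! i) \<theta>}"
    using assms(1) unfolding definable_set_def by blast
  have "{a. length a = n \<and> a @ c \<in> S} = {a. length a = n \<and> sat FI RI (\<lambda>i. (a @ (c @ e)) ! i) \<theta>}"
    using assms(2) by (auto simp: S)
  moreover have "fv \<theta> \<subseteq> {..<n + length (c @ e)}" using fe assms(2) by auto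
  ultimately show ?thesis unfolding definable_set_def by blast
qed

lemma def_set_compl:
  assumes "definable_set FI RI n D"
  shows "definable_set FI RI n ({a. length a = n} - D)"
proof -
  obtain \<phi> b where f: "fv \<phi> \<subseteq> {..<n + length b}"
    and D: "D = {a. length a = n \<and> sat FI RI (\<lambda>i. (a @ b) ! i) \<phi>}"
    using assms unfolding definable_set_def by blast
  have "{a. length a = n} - D = {a. length a = n \<and> sat FI RI (\<lambda>i. (a @ b) ! i) (Neg \<phi>)}"
    by (auto simp: D)
  moreover have "fv (Neg \<phi>) \<subseteq> {..<n + length b}" using f by simp
  ultimately show ?thesis unfolding definable_set_def by blast
qed

lemma def_set_Int:
  assumes "definable_set FI RI n D1" "definable_set FI RI n D2"
  shows "definable_set FI RI n (D1 \<inter> D2)"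
proof -
  obtain \<phi>1 b1 where f1: "fv \<phi>1 \<subseteq> {..<n + length b1}"
    and D1: "D1 = {a. length a = n \<and> sat FI RI (\<lambda>i. (a @ b1) ! i) \<phi>1}"
    using assms(1) unfolding definable_set_def by blast
  obtain \<phi>2 b2 where f2: "fv \<phi>2 \<subseteq> {..<n + length b2}"
    and D2: "D2 = {a. length a = n \<and> sat FI RI (\<lambda>i. (a @ b2) ! i) \<phi>2}"
    using assms(2) unfolding definable_set_def by blast
  define \<sigma> where "\<sigma> = (\<lambda>i::nat. if i < n then i else i + length b1)"
  define \<psi> where "\<psi> = Conj \<phi>1 (rn \<sigma> \<phi>2)"
  have fvp: "fv \<psi> \<subseteq> {..<n + length (b1 @ b2)}"
  proof -
    have "fv (rn \<sigma> \<phi>2) \<subseteq> \<sigma> ` {..<n + length b2}" using fv_rn[of \<sigma> \<phi>2] f2 by blast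
    also have "\<dots> \<subseteq> {..<n + length (b1 @ b2)}" by (auto simp: \<sigma>_def)
    finally show ?thesis using f1 by (auto simp: \<psi>_def)
  qed
  have pt: "(a \<in> D1 \<inter> D2) = sat FI RI (\<lambda>i. (a @ (b1 @ b2)) ! i) \<psi>" if len: "length a = n" for a
  proof -
    have e1: "sat FI RI (\<lambda>i. (a @ (b1 @ b2)) ! i) \<phi>1 = sat FI RI (\<lambda>i. (a @ b1) ! i) \<phi>1"
      using f1 len by (intro sat_cong) (auto simp: nth_append)
    have e2: "sat FI RI ((\<lambda>i. (a @ (b1 @ b2)) ! i) \<circ> \<sigma>) \<phi>2 = sat FI RI (\<lambda>i. (a @ b2) ! i) \<phi>2"
      using f2 len by (intro sat_cong) (auto simp: nth_append \<sigma>_def)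
    show ?thesis using e1 e2 len by (simp add: D1 D2 \<psi>_def sat_rn)
  qed
  have "D1 \<inter> D2 = {a. length a = n \<and> sat FI RI (\<lambda>i. (a @ (b1 @ b2)) ! i) \<psi>}"
    using pt by (auto simp: D1)
  then show ?thesis using fvp unfolding definable_set_def by blast
qed




locale dg =
  fixes FI :: "'f \<Rightarrow> 'm list \<Rightarrow> 'm" and RI :: "'r \<Rightarrow> 'm list \<Rightarrow> bool"
    and k :: nat and Gr :: "('m list, 'z) monoid_scheme"
  assumes G: "definable_group FI RI k Gr"
begin

abbreviation "GG \<equiv> carrier Gr"
abbreviation "DS \<equiv> def_subsets FI RI k (carrier Gr)"

lemma grp: "group Gr" using G by (simp add: definable_group_def)

lemma G_def: "definable_set FI RI k GG" using G by (simp add: definable_group_def)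

lemma G_len: "x \<in> GG \<Longrightarrow> length x = k" using def_set_len[OF G_def] by blast

lemma G_DS: "GG \<in> DS" using G_def by (simp add: def_subsets_def)

lemma DS_sub: "D \<in> DS \<Longrightarrow> D \<subseteq> GG" by (simp add: def_subsets_def)

lemma DS_Int: "D \<in> DS \<Longrightarrow> E \<in> DS \<Longrightarrow> D \<inter> E \<in> DS"
  by (auto simp: def_subsets_def intro: def_set_Int)

lemma DS_Diff: assumes "D \<in> DS" shows "GG - D \<in> DS"
proof -
  have "GG - D = GG \<inter> ({a. length a = k} - D)" using G_len by auto
  then show ?thesis using assms G_def
    by (auto simp: def_subsets_def intro!: def_set_Int def_set_compl)
qed

lemma DS_Un: assumes "D \<in> DS" "E \<in> DS" shows "D \<union> E \<in> DS"
proof -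
  have "D \<union> E = GG - ((GG - D) \<inter> (GG - E))" using assms DS_sub by auto
  then show ?thesis using assms by (simp add: DS_Int DS_Diff)
qed

lemma DS_empty: "{} \<in> DS" using DS_Diff[OF G_DS] by simp

lemma DS_Union: "finite F \<Longrightarrow> F \<subseteq> DS \<Longrightarrow> \<Union>F \<in> DS"
  by (induct F rule: finite_induct) (auto simp: DS_empty DS_Un)

lemma DS_Inter: "finite F \<Longrightarrow> F \<subseteq> DS \<Longrightarrow> GG \<inter> \<Inter>F \<in> DS"
proof (induct F rule: finite_induct)
  case empty then show ?case using G_DS by simp
next
  case (insert D F)
  have "GG \<inter> \<Inter>(insert D F) = D \<inter> (GG \<inter> \<Inter>F)" using insert DS_sub by auto
  then show ?case using insert DS_Int by auto
qed

lemma DS_defI: "D \<subseteq> GG \<Longrightarrow> definable_set FI RI k D \<Longrightarrow> D \<in> DS"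
  by (simp add: def_subsets_def)

lemma graph_mem:
  assumes "length g = k" "length x = k"
  shows "g @ x @ y \<in> {a @ b @ c | a b c. a \<in> GG \<and> b \<in> GG \<and> c = a \<otimes>\<^bsub>Gr\<^esub> b}
     \<longleftrightarrow> g \<in> GG \<and> x \<in> GG \<and> y = g \<otimes>\<^bsub>Gr\<^esub> x"
proof
  assume "g @ x @ y \<in> {a @ b @ c | a b c. a \<in> GG \<and> b \<in> GG \<and> c = a \<otimes>\<^bsub>Gr\<^esub> b}"
  then obtain a b c where e: "g @ x @ y = a @ b @ c" and ab: "a \<in> GG" "b \<in> GG" "c = a \<otimes>\<^bsub>Gr\<^esub> b"
    by blast
  have "g = a \<and> x @ y = b @ c" using e G_len[OF ab(1)] assms by (simp add: append_eq_append_conv)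
  moreover then have "x = b \<and> y = c" using G_len[OF ab(2)] assms by (simp add: append_eq_append_conv)
  ultimately show "g \<in> GG \<and> x \<in> GG \<and> y = g \<otimes>\<^bsub>Gr\<^esub> x" using ab by simp
qed blast

lemma transl:
  assumes D: "definable_set FI RI k D"
  shows "\<exists>\<psi> c. fv \<psi> \<subseteq> {..<k + (k + length c)} \<and>
     (\<forall>x g. length x = k \<longrightarrow> length g = k \<longrightarrow>
        (sat FI RI (\<lambda>i. (x @ g @ c) ! i) \<psi> \<longleftrightarrow> x \<in> GG \<and> g \<in> GG \<and> g \<otimes>\<^bsub>Gr\<^esub> x \<in> D))"
proof -
  obtain \<mu> bm where fm: "fv \<mu> \<subseteq> {..<3 * k + length bm}"
    and M: "{a @ b @ c | a b c. a \<in> GG \<and> b \<in> GG \<and> c = a \<otimes>\<^bsub>Gr\<^esub> b}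
       = {a. length a = 3 * k \<and> sat FI RI (\<lambda>i. (a @ bm) ! i) \<mu>}"
    using G unfolding definable_group_def definable_set_def by blast
  obtain \<phi> bd where fd: "fv \<phi> \<subseteq> {..<k + length bd}"
    and DD: "D = {a. length a = k \<and> sat FI RI (\<lambda>i. (a @ bd) ! i) \<phi>}"
    using D unfolding definable_set_def by blast
  define P where "P = 2 * k + length bm + length bd"
  define \<sigma>m where "\<sigma>m = (\<lambda>j. if j < k then k + j else if j < 2 * k then j - k
      else if j < 3 * k then P + (j - 2 * k) else 2 * k + (j - 3 * k))"
  define \<sigma>d where "\<sigma>d = (\<lambda>j. if j < k then P + j else 2 * k + length bm + (j - k))"
  define \<psi> where "\<psi> = exis [P..<P+k] (Conj (rn \<sigma>m \<mu>) (rn \<sigma>d \<phi>))"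
  define c where "c = bm @ bd"
  have fvp: "fv \<psi> \<subseteq> {..<k + (k + length c)}"
  proof -
    have "fv (rn \<sigma>m \<mu>) \<subseteq> \<sigma>m ` {..<3 * k + length bm}" using fv_rn[of \<sigma>m \<mu>] fm by blast
    also have "\<dots> \<subseteq> {..<P + k}" by (auto simp: \<sigma>m_def P_def)
    finally have 1: "fv (rn \<sigma>m \<mu>) \<subseteq> {..<P + k}" .
    have "fv (rn \<sigma>d \<phi>) \<subseteq> \<sigma>d ` {..<k + length bd}" using fv_rn[of \<sigma>d \<phi>] fd by blast
    also have "\<dots> \<subseteq> {..<P + k}" by (auto simp: \<sigma>d_def P_def)
    finally have 2: "fv (rn \<sigma>d \<phi>) \<subseteq> {..<P + k}" .
    have "fv \<psi> \<subseteq> {..<P + k} - {P..<P+k}" using 1 2 by (auto simp: \<psi>_def fv_exis)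
    also have "\<dots> \<subseteq> {..<k + (k + length c)}" by (auto simp: P_def c_def)
    finally show ?thesis .
  qed
  have sem: "sat FI RI (\<lambda>i. (x @ g @ c) ! i) \<psi> \<longleftrightarrow> x \<in> GG \<and> g \<in> GG \<and> g \<otimes>\<^bsub>Gr\<^esub> x \<in> D"
    if lx: "length x = k" and lg: "length g = k" for x g
  proof -
    define w where "w = (\<lambda>i. (x @ g @ c) ! i)"
    define wf where "wf = (\<lambda>f j. if j \<in> set [P..<P+k] then f j else w j)"
    have A: "sat FI RI (wf f \<circ> \<sigma>m) \<mu> = sat FI RI (\<lambda>i. ((g @ x @ map f [P..<P+k]) @ bm) ! i) \<mu>" for f
    proof (rule sat_cong, intro ballI)
      fix j assume "j \<in> fv \<mu>"
      then have j: "j < 3 * k + length bm" using fm by auto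
      show "(wf f \<circ> \<sigma>m) j = ((g @ x @ map f [P..<P+k]) @ bm) ! j"
      proof (cases "j < k")
        case True then show ?thesis using lx lg
          by (auto simp: wf_def w_def \<sigma>m_def nth_append P_def)
      next
        case F1: False
        show ?thesis
        proof (cases "j < 2 * k")
          case True then show ?thesis using lx lg F1
            by (auto simp: wf_def w_def \<sigma>m_def nth_append P_def)
        next
          case F2: False
          show ?thesis
          proof (cases "j < 3 * k")
            case True then show ?thesis using lx lg F1 F2
              by (auto simp: wf_def w_def \<sigma>m_def nth_append P_def)
          next
            case False then show ?thesis using lx lg F1 F2 j
              by (auto simp: wf_def w_def \<sigma>m_def nth_append P_def c_def)
          qed
        qed
      qed
    qed
    have B: "sat FI RI (wf f \<circ> \<sigma>d) \<phi> = sat FI RI (\<lambda>i. (map f [P..<P+k] @ bd) ! i) \<phi>" for f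
    proof (rule sat_cong, intro ballI)
      fix j assume "j \<in> fv \<phi>"
      then have j: "j < k + length bd" using fd by auto
      show "(wf f \<circ> \<sigma>d) j = (map f [P..<P+k] @ bd) ! j"
      proof (cases "j < k")
        case True then show ?thesis using lx lg
          by (auto simp: wf_def w_def \<sigma>d_def nth_append P_def)
      next
        case False then show ?thesis using lx lg j
          by (auto simp: wf_def w_def \<sigma>d_def nth_append P_def c_def)
      qed
    qed
    have "sat FI RI w \<psi> \<longleftrightarrow> (\<exists>f. sat FI RI (wf f \<circ> \<sigma>m) \<mu> \<and> sat FI RI (wf f \<circ> \<sigma>d) \<phi>)"
      by (simp add: \<psi>_def sat_exis sat_rn wf_def)
    also have "\<dots> \<longleftrightarrow> (\<exists>f. sat FI RI (\<lambda>i. ((g @ x @ map f [P..<P+k]) @ bm) ! i) \<mu>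
        \<and> map f [P..<P+k] \<in> D)"
      using lx lg by (simp add: A B DD)
    also have "\<dots> \<longleftrightarrow> (\<exists>f. g \<in> GG \<and> x \<in> GG \<and> map f [P..<P+k] = g \<otimes>\<^bsub>Gr\<^esub> x \<and> map f [P..<P+k] \<in> D)"
    proof -
      have Mi: "sat FI RI (\<lambda>i. (z @ bm) ! i) \<mu> \<longleftrightarrow>
          z \<in> {a @ b @ c | a b c. a \<in> GG \<and> b \<in> GG \<and> c = a \<otimes>\<^bsub>Gr\<^esub> b}"
        if "length z = 3 * k" for z
        by (subst M) (simp add: that)
      have "sat FI RI (\<lambda>i. ((g @ x @ map f [P..<P+k]) @ bm) ! i) \<mu> \<longleftrightarrow>
          g \<in> GG \<and> x \<in> GG \<and> map f [P..<P+k] = g \<otimes>\<^bsub>Gr\<^esub> x" for f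
        using Mi[of "g @ x @ map f [P..<P+k]"] graph_mem[OF lg lx, of "map f [P..<P+k]"] lx lg by simp
      then show ?thesis by simp
    qed
    also have "\<dots> \<longleftrightarrow> x \<in> GG \<and> g \<in> GG \<and> g \<otimes>\<^bsub>Gr\<^esub> x \<in> D"
    proof
      assume "x \<in> GG \<and> g \<in> GG \<and> g \<otimes>\<^bsub>Gr\<^esub> x \<in> D"
      moreover then have "length (g \<otimes>\<^bsub>Gr\<^esub> x) = k" using G_len group.subgroup_self[OF grp]
        by (meson monoid.m_closed group.is_monoid grp)
      moreover then have "map (\<lambda>j. (g \<otimes>\<^bsub>Gr\<^esub> x) ! (j - P)) [P..<P+k] = g \<otimes>\<^bsub>Gr\<^esub> x"
        by (auto intro!: nth_equalityI)
      ultimately show "\<exists>f. g \<in> GG \<and> x \<in> GG \<and> map f [P..<P+k] = g \<otimes>\<^bsub>Gr\<^esub> x \<and> map f [P..<P+k] \<in> D"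
        by metis
    qed auto
    finally show ?thesis by (simp add: w_def)
  qed
  show ?thesis using fvp sem by blast
qed

end



context dg begin

abbreviation "SGG \<equiv> SG FI RI k (carrier Gr)"
abbreviation "TOP \<equiv> SG_top FI RI k (carrier Gr)"
abbreviation "act \<equiv> type_act FI RI k Gr"
abbreviation "tpp \<equiv> tp FI RI k (carrier Gr)"
definition "basic D = {p \<in> SGG. D \<in> p}"

lemma transl_DS:
  assumes g: "g \<in> GG" and D: "D \<in> DS"
  shows "{x \<in> GG. g \<otimes>\<^bsub>Gr\<^esub> x \<in> D} \<in> DS"
proof -
  obtain \<psi> c where f: "fv \<psi> \<subseteq> {..<k + (k + length c)}"
    and s: "\<forall>x g. length x = k \<longrightarrow> length g = k \<longrightarrow>
        (sat FI RI (\<lambda>i. (x @ g @ c) ! i) \<psi> \<longleftrightarrow> x \<in> GG \<and> g \<in> GG \<and> g \<otimes>\<^bsub>Gr\<^esub> x \<in> D)"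
    using transl[of D] D by (auto simp: def_subsets_def)
  have lg: "length g = k" using G_len g by blast
  have "{x \<in> GG. g \<otimes>\<^bsub>Gr\<^esub> x \<in> D} = {x. length x = k \<and> sat FI RI (\<lambda>i. (x @ (g @ c)) ! i) \<psi>}"
    using s lg g G_len by auto
  moreover have "fv \<psi> \<subseteq> {..<k + length (g @ c)}" using f lg by simp
  ultimately have "definable_set FI RI k {x \<in> GG. g \<otimes>\<^bsub>Gr\<^esub> x \<in> D}"
    unfolding definable_set_def by blast
  then show ?thesis by (auto intro: DS_defI)
qed

lemma SG_D: assumes "p \<in> SGG"
  shows "p \<subseteq> DS" "GG \<in> p" "{} \<notin> p" "D \<in> p \<Longrightarrow> E \<in> p \<Longrightarrow> D \<inter> E \<in> p"
    "D \<in> p \<Longrightarrow> E \<in> DS \<Longrightarrow> D \<subseteq> E \<Longrightarrow> E \<in> p"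
    "D \<in> DS \<Longrightarrow> D \<in> p \<or> GG - D \<in> p"
  using assms unfolding SG_def by blast+

lemma SG_Int_iff: "p \<in> SGG \<Longrightarrow> D \<in> DS \<Longrightarrow> E \<in> DS \<Longrightarrow> D \<inter> E \<in> p \<longleftrightarrow> D \<in> p \<and> E \<in> p"
  using SG_D[of p] by blast

lemma SG_compl: "p \<in> SGG \<Longrightarrow> D \<in> DS \<Longrightarrow> GG - D \<in> p \<longleftrightarrow> D \<notin> p"
proof -
  assume p: "p \<in> SGG" and D: "D \<in> DS"
  have "D \<in> p \<Longrightarrow> GG - D \<in> p \<Longrightarrow> False"
    using SG_D(4)[OF p, of D "GG - D"] SG_D(3)[OF p] by (simp add: Int_Diff)
  then show ?thesis using SG_D(6)[OF p D] by blast
qed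

lemma SG_Un: assumes p: "p \<in> SGG" and "D \<in> DS" "E \<in> DS" "D \<union> E \<in> p" shows "D \<in> p \<or> E \<in> p"
proof (rule ccontr)
  assume "\<not> (D \<in> p \<or> E \<in> p)"
  then have "(GG - D) \<inter> (GG - E) \<in> p" using assms SG_compl SG_D(4) by blast
  then have "(GG - D) \<inter> (GG - E) \<inter> (D \<union> E) \<in> p" using assms SG_D(4) by blast
  moreover have "(GG - D) \<inter> (GG - E) \<inter> (D \<union> E) = {}" by auto
  ultimately show False using SG_D(3)[OF p] by simp
qed

lemma SG_Union: assumes p: "p \<in> SGG" shows "finite F \<Longrightarrow> F \<subseteq> DS \<Longrightarrow> \<Union>F \<in> p \<Longrightarrow> \<exists>D\<in>F. D \<in> p"
proof (induct F rule: finite_induct)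
  case empty then show ?case using SG_D(3)[OF p] by auto
next
  case (insert D F)
  then have "D \<in> p \<or> \<Union>F \<in> p" using SG_Un[OF p, of D "\<Union>F"] DS_Union by auto
  then show ?case using insert by auto
qed

lemma SG_Inter: assumes p: "p \<in> SGG" shows "finite F \<Longrightarrow> F \<subseteq> p \<Longrightarrow> GG \<inter> \<Inter>F \<in> p"
proof (induct F rule: finite_induct)
  case empty then show ?case using SG_D(2)[OF p] by auto
next
  case (insert D F)
  have "GG \<inter> \<Inter>(insert D F) = D \<inter> (GG \<inter> \<Inter>F)" using insert SG_D(1)[OF p] DS_sub by blast
  then show ?case using insert SG_D(4)[OF p] by auto
qed

lemma SG_eq: assumes "p \<in> SGG" "q \<in> SGG" "p \<subseteq> q" shows "p = q"
proof -
  have "D \<in> p" if "D \<in> q" for D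
  proof (rule ccontr)
    assume "D \<notin> p"
    then have "GG - D \<in> q" using assms that SG_compl SG_D(1) by blast
    then show False using that SG_compl assms SG_D(1) by blast
  qed
  then show ?thesis using assms by blast
qed

lemma tp_SG: assumes g: "g \<in> GG" shows "tpp g \<in> SGG"
  unfolding SG_def tp_def using g G_DS DS_empty DS_Int DS_Diff by auto

lemma act_SG: assumes g: "g \<in> GG" and p: "p \<in> SGG" shows "act g p \<in> SGG"
proof -
  let ?T = "\<lambda>D. {x \<in> GG. g \<otimes>\<^bsub>Gr\<^esub> x \<in> D}"
  have cl: "\<And>x. x \<in> GG \<Longrightarrow> g \<otimes>\<^bsub>Gr\<^esub> x \<in> GG" using g grp by (simp add: group.is_monoid monoid.m_closed)
  have TG: "?T GG = GG" using cl by auto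
  have Te: "?T {} = {}" by auto
  have TI: "?T (D \<inter> E) = ?T D \<inter> ?T E" for D E by auto
  have TD: "?T (GG - D) = GG - ?T D" for D using cl by auto
  have a: "D \<in> act g p \<longleftrightarrow> D \<in> DS \<and> ?T D \<in> p" for D by (simp add: type_act_def)
  show ?thesis unfolding SG_def
  proof (intro CollectI conjI ballI impI)
    show "act g p \<subseteq> DS" using a by blast
    show "GG \<in> act g p" using a G_DS TG SG_D(2)[OF p] by simp
    show "{} \<notin> act g p" using a Te SG_D(3)[OF p] by simp
    show "D \<inter> E \<in> act g p" if "D \<in> act g p" "E \<in> act g p" for D E
      using that a TI SG_D(4)[OF p] DS_Int by simp
    show "E \<in> act g p" if "D \<in> act g p" "E \<in> DS" "D \<subseteq> E" for D E
    proof -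
      have "?T D \<subseteq> ?T E" using that by auto
      then show ?thesis using that a SG_D(5)[OF p] transl_DS[OF g] by blast
    qed
    show "D \<in> act g p \<or> GG - D \<in> act g p" if "D \<in> DS" for D
      using that a TD SG_D(6)[OF p] transl_DS[OF g] DS_Diff by simp
  qed
qed

lemma act_one: assumes p: "p \<in> SGG" shows "act \<one>\<^bsub>Gr\<^esub> p = p"
proof -
  have "{x \<in> GG. \<one>\<^bsub>Gr\<^esub> \<otimes>\<^bsub>Gr\<^esub> x \<in> D} = D" if "D \<in> DS" for D
    using that DS_sub[OF that] grp by (auto simp: group.is_monoid monoid.l_one)
  then show ?thesis using SG_D(1)[OF p] by (auto simp: type_act_def)
qed

lemma act_mult: assumes g: "g \<in> GG" and h: "h \<in> GG" and p: "p \<in> SGG"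
  shows "act (g \<otimes>\<^bsub>Gr\<^esub> h) p = act g (act h p)"
proof -
  have "{x \<in> GG. (g \<otimes>\<^bsub>Gr\<^esub> h) \<otimes>\<^bsub>Gr\<^esub> x \<in> D} = {y \<in> GG. h \<otimes>\<^bsub>Gr\<^esub> y \<in> {x \<in> GG. g \<otimes>\<^bsub>Gr\<^esub> x \<in> D}}" for D
    using g h grp by (auto simp: group.is_monoid monoid.m_assoc monoid.m_closed)
  then show ?thesis using transl_DS[OF g] by (auto simp: type_act_def)
qed

lemma act_tp: assumes g: "g \<in> GG" shows "act g (tpp \<one>\<^bsub>Gr\<^esub>) = tpp g"
proof -
  have "\<one>\<^bsub>Gr\<^esub> \<in> GG" "g \<otimes>\<^bsub>Gr\<^esub> \<one>\<^bsub>Gr\<^esub> = g" using g grp by (auto simp: group.is_monoid monoid.r_one monoid.one_closed)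
  then show ?thesis using transl_DS[OF g] by (auto simp: type_act_def tp_def)
qed

lemma basic_Int: "D \<in> DS \<Longrightarrow> E \<in> DS \<Longrightarrow> basic D \<inter> basic E = basic (D \<inter> E)"
  unfolding basic_def using SG_Int_iff by auto

lemma topspace_TOP: "topspace TOP = SGG"
proof -
  have "topspace TOP = \<Union>(basic ` DS)" unfolding SG_top_def basic_def by simp
  also have "\<dots> = SGG" using G_DS SG_D(2) unfolding basic_def by blast
  finally show ?thesis .
qed

lemma basic_open: "D \<in> DS \<Longrightarrow> openin TOP (basic D)"
  unfolding SG_top_def basic_def openin_topology_generated_by_iff
  by (rule generate_topology_on.Basis) blast

lemma open_basic_aux:
  assumes "generate_topology_on (basic ` DS) W"
  shows "\<forall>p\<in>W. \<exists>D\<in>DS. p \<in> basic D \<and> basic D \<subseteq> W"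
  using assms
proof (induct rule: generate_topology_on.induct)
  case (Int a b)
  show ?case
  proof
    fix p assume "p \<in> a \<inter> b"
    then obtain D E where "D \<in> DS" "p \<in> basic D" "basic D \<subseteq> a" "E \<in> DS" "p \<in> basic E" "basic E \<subseteq> b"
      using Int by blast
    then have "basic (D \<inter> E) = basic D \<inter> basic E" "D \<inter> E \<in> DS" using basic_Int DS_Int by auto
    then show "\<exists>D\<in>DS. p \<in> basic D \<and> basic D \<subseteq> a \<inter> b"
      using \<open>p \<in> basic D\<close> \<open>p \<in> basic E\<close> \<open>basic D \<subseteq> a\<close> \<open>basic E \<subseteq> b\<close>
      by (intro bexI[of _ "D \<inter> E"]) auto
  qed
next
  case (UN K) then show ?case by blast
qed auto

lemma open_basic: "openin TOP W \<Longrightarrow> p \<in> W \<Longrightarrow> \<exists>D\<in>DS. p \<in> basic D \<and> basic D \<subseteq> W"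
  using open_basic_aux unfolding SG_top_def openin_topology_generated_by_iff basic_def by blast

lemma cont_TOP:
  assumes "\<forall>p\<in>SGG. f p \<in> SGG" "\<forall>D\<in>DS. openin TOP {p \<in> SGG. D \<in> f p}"
  shows "continuous_map TOP TOP f"
  unfolding continuous_map_def topspace_TOP
proof (intro conjI allI impI)
  show "f \<in> SGG \<rightarrow> SGG" using assms by blast
  fix W assume W: "openin TOP W"
  show "openin TOP {x \<in> SGG. f x \<in> W}"
  proof (subst openin_subopen, intro ballI)
    fix p assume p: "p \<in> {x \<in> SGG. f x \<in> W}"
    then obtain D where D: "D \<in> DS" "f p \<in> basic D" "basic D \<subseteq> W" using open_basic[OF W] by blast
    show "\<exists>T. openin TOP T \<and> p \<in> T \<and> T \<subseteq> {x \<in> SGG. f x \<in> W}"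
      using D p assms by (intro exI[of _ "{p \<in> SGG. D \<in> f p}"]) (auto simp: basic_def)
  qed
qed

lemma act_cont: assumes g: "g \<in> GG" shows "continuous_map TOP TOP (act g)"
proof (rule cont_TOP)
  show "\<forall>p\<in>SGG. act g p \<in> SGG" using act_SG g by blast
  show "\<forall>D\<in>DS. openin TOP {p \<in> SGG. D \<in> act g p}"
  proof
    fix D assume D: "D \<in> DS"
    have "{p \<in> SGG. D \<in> act g p} = basic {x \<in> GG. g \<otimes>\<^bsub>Gr\<^esub> x \<in> D}"
      using D by (auto simp: basic_def type_act_def)
    then show "openin TOP {p \<in> SGG. D \<in> act g p}" using basic_open transl_DS[OF g D] by simp
  qed
qed

lemma act_homeo: assumes g: "g \<in> GG" shows "homeomorphic_map TOP TOP (act g)"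
proof -
  have gi: "inv\<^bsub>Gr\<^esub> g \<in> GG" using g grp by (simp add: group.inv_closed)
  have "act (inv\<^bsub>Gr\<^esub> g) (act g p) = p" if "p \<in> SGG" for p
    using act_mult[OF gi g that] act_one[OF that] g grp by (simp add: group.l_inv)
  moreover have "act g (act (inv\<^bsub>Gr\<^esub> g) p) = p" if "p \<in> SGG" for p
    using act_mult[OF g gi that] act_one[OF that] g grp by (simp add: group.r_inv)
  ultimately have "homeomorphic_maps TOP TOP (act g) (act (inv\<^bsub>Gr\<^esub> g))"
    unfolding homeomorphic_maps_def topspace_TOP using act_cont g gi by blast
  then show ?thesis using homeomorphic_map_maps by blast
qed

lemma Hausdorff_TOP: "Hausdorff_space TOP"
  unfolding Hausdorff_space_def topspace_TOP
proof (intro allI impI)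
  fix p q assume a: "p \<in> SGG \<and> q \<in> SGG \<and> p \<noteq> q"
  then obtain D where D: "D \<in> p" "D \<notin> q"
    using SG_eq by blast
  then have D': "D \<in> DS" "GG - D \<in> q" using a SG_D(1) SG_compl by blast+
  have "disjnt (basic D) (basic (GG - D))" using SG_compl D'(1) by (auto simp: basic_def disjnt_def)
  then show "\<exists>U V. openin TOP U \<and> openin TOP V \<and> p \<in> U \<and> q \<in> V \<and> disjnt U V"
    using basic_open D D' DS_Diff a by (auto simp: basic_def)
qed

end



context dg begin

definition "isfilt q \<longleftrightarrow> q \<subseteq> DS \<and> GG \<in> q \<and> {} \<notin> q \<and> (\<forall>D\<in>q. \<forall>E\<in>q. D \<inter> E \<in> q)
   \<and> (\<forall>D\<in>q. \<forall>E\<in>DS. D \<subseteq> E \<longrightarrow> E \<in> q)"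

lemma ultra: assumes F0: "isfilt F0" shows "\<exists>p\<in>SGG. F0 \<subseteq> p"
proof -
  let ?A = "{q. isfilt q \<and> F0 \<subseteq> q}"
  have "\<forall>C\<in>chains ?A. \<exists>U\<in>?A. \<forall>X\<in>C. X \<subseteq> U"
  proof
    fix C assume C: "C \<in> chains ?A"
    then have CA: "C \<subseteq> ?A" and ch: "\<forall>x\<in>C. \<forall>y\<in>C. x \<subseteq> y \<or> y \<subseteq> x"
      unfolding chains_def chain_subset_def by auto
    show "\<exists>U\<in>?A. \<forall>X\<in>C. X \<subseteq> U"
    proof (cases "C = {}")
      case True then show ?thesis using F0 by blast
    next
      case False
      then obtain q0 where q0: "q0 \<in> C" by blast
      have "isfilt (\<Union>C)" unfolding isfilt_def
      proof (intro conjI ballI impI)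
        show "\<Union>C \<subseteq> DS" using CA by (auto simp: isfilt_def)
        show "GG \<in> \<Union>C" using CA q0 by (auto simp: isfilt_def)
        show "{} \<notin> \<Union>C" using CA by (auto simp: isfilt_def)
        show "D \<inter> E \<in> \<Union>C" if h: "D \<in> \<Union>C" "E \<in> \<Union>C" for D E
        proof -
          obtain q1 q2 where "q1 \<in> C" "q2 \<in> C" "D \<in> q1" "E \<in> q2" using h by blast
          moreover have "isfilt q1" "isfilt q2" using CA \<open>q1 \<in> C\<close> \<open>q2 \<in> C\<close> by auto
          moreover have "q1 \<subseteq> q2 \<or> q2 \<subseteq> q1" using ch \<open>q1 \<in> C\<close> \<open>q2 \<in> C\<close> by blast
          ultimately have "D \<inter> E \<in> q1 \<or> D \<inter> E \<in> q2" unfolding isfilt_def by blast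
          then show ?thesis using \<open>q1 \<in> C\<close> \<open>q2 \<in> C\<close> by blast
        qed
        show "E \<in> \<Union>C" if h: "D \<in> \<Union>C" "E \<in> DS" "D \<subseteq> E" for D E
        proof -
          obtain q1 where "q1 \<in> C" "D \<in> q1" using h by blast
          moreover have "isfilt q1" using CA \<open>q1 \<in> C\<close> by auto
          ultimately show ?thesis using h unfolding isfilt_def by blast
        qed
      qed
      moreover have "F0 \<subseteq> \<Union>C" using CA q0 by blast
      ultimately show ?thesis by blast
    qed
  qed
  then obtain M where M: "M \<in> ?A" "\<forall>X\<in>?A. M \<subseteq> X \<longrightarrow> X = M"
    using Zorn_Lemma2[of ?A] by blast
  have fM: "isfilt M" using M by blast
  have ultraM: "D \<in> M \<or> GG - D \<in> M" if D: "D \<in> DS" for D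
  proof (rule ccontr)
    assume nD: "\<not> (D \<in> M \<or> GG - D \<in> M)"
    show False
    proof (cases "\<exists>Q\<in>M. Q \<inter> D = {}")
      case True
      then obtain Q where Q: "Q \<in> M" "Q \<inter> D = {}" by blast
      have "Q \<in> DS" using fM Q(1) unfolding isfilt_def by blast
      then have "Q \<subseteq> GG - D" using DS_sub Q(2) by blast
      moreover have "\<forall>D\<in>M. \<forall>E\<in>DS. D \<subseteq> E \<longrightarrow> E \<in> M" using fM unfolding isfilt_def by blast
      ultimately have "GG - D \<in> M" using Q(1) DS_Diff[OF D] by blast
      then show False using nD by blast
    next
      case False
      define M' where "M' = {E \<in> DS. \<exists>Q\<in>M. Q \<inter> D \<subseteq> E}"
      have "isfilt M'" unfolding isfilt_def
      proof (intro conjI ballI impI)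
        show "M' \<subseteq> DS" by (auto simp: M'_def)
        show "GG \<in> M'" using fM G_DS unfolding M'_def isfilt_def by blast
        show "{} \<notin> M'" using False unfolding M'_def by blast
        show "E1 \<inter> E2 \<in> M'" if h: "E1 \<in> M'" "E2 \<in> M'" for E1 E2
        proof -
          obtain Q1 Q2 where "Q1 \<in> M" "Q2 \<in> M" "Q1 \<inter> D \<subseteq> E1" "Q2 \<inter> D \<subseteq> E2" "E1 \<in> DS" "E2 \<in> DS"
            using h unfolding M'_def by blast
          moreover then have "Q1 \<inter> Q2 \<in> M" using fM unfolding isfilt_def by blast
          ultimately show ?thesis unfolding M'_def using DS_Int by blast
        qed
        show "E2 \<in> M'" if "E1 \<in> M'" "E2 \<in> DS" "E1 \<subseteq> E2" for E1 E2
          using that unfolding M'_def by blast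
      qed
      moreover have "M \<subseteq> M'" using fM unfolding M'_def isfilt_def by blast
      moreover have "D \<in> M'" using fM D unfolding M'_def isfilt_def by blast
      moreover have "F0 \<subseteq> M" using M by blast
      ultimately have "M' \<in> ?A" by blast
      then have "M' = M" using M \<open>M \<subseteq> M'\<close> by blast
      then show False using nD \<open>D \<in> M'\<close> by blast
    qed
  qed
  have "M \<in> SGG" unfolding SG_def
    using fM ultraM unfolding isfilt_def by (intro CollectI conjI) auto
  then show ?thesis using M by blast
qed

lemma compact_TOP: "compact_space TOP"
  unfolding compact_space_def compactin_def topspace_TOP
proof (intro conjI allI impI subset_refl)
  fix U assume U: "(\<forall>u\<in>U. openin TOP u) \<and> SGG \<subseteq> \<Union>U"
  let ?D = "{D \<in> DS. \<exists>u\<in>U. basic D \<subseteq> u}"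
  have cov: "\<exists>D\<in>?D. D \<in> p" if p: "p \<in> SGG" for p
  proof -
    obtain u where "u \<in> U" "p \<in> u" using U p by blast
    then obtain D where "D \<in> DS" "p \<in> basic D" "basic D \<subseteq> u" using open_basic U by blast
    then show ?thesis using \<open>u \<in> U\<close> by (auto simp: basic_def)
  qed
  have fin: "\<exists>F. finite F \<and> F \<subseteq> ?D \<and> (\<forall>p\<in>SGG. \<exists>D\<in>F. D \<in> p)"
  proof (rule ccontr)
    assume nf: "\<not> ?thesis"
    let ?I = "\<lambda>F. GG \<inter> \<Inter>((\<lambda>D. GG - D) ` F)"
    define F0 where "F0 = {E \<in> DS. \<exists>F. finite F \<and> F \<subseteq> ?D \<and> ?I F \<subseteq> E}"
    have IDS: "?I F \<in> DS" if "finite F" "F \<subseteq> ?D" for F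
      using that by (intro DS_Inter) (auto intro: DS_Diff)
    have ne: "?I F \<noteq> {}" if h: "finite F" "F \<subseteq> ?D" for F
    proof -
      have "\<not> (\<forall>p\<in>SGG. \<exists>D\<in>F. D \<in> p)" using nf h by blast
      then obtain p where p: "p \<in> SGG" "\<forall>D\<in>F. D \<notin> p" by blast
      have "GG - D \<in> p" if "D \<in> F" for D
      proof -
        have "D \<in> DS" using that h by blast
        then show ?thesis using SG_compl[OF p(1)] p(2) that by blast
      qed
      then have "(\<lambda>D. GG - D) ` F \<subseteq> p" by blast
      moreover have "finite ((\<lambda>D. GG - D) ` F)" using h(1) by simp
      ultimately have IF: "?I F \<in> p" using SG_Inter[OF p(1)] by blast
      show ?thesis
      proof
        assume "?I F = {}"
        then have "{} \<in> p" using IF by metis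
        then show False using SG_D(3)[OF p(1)] by blast
      qed
    qed
    have "isfilt F0" unfolding isfilt_def
    proof (intro conjI ballI impI)
      show "F0 \<subseteq> DS" by (auto simp: F0_def)
      show "GG \<in> F0"
      proof -
        have "?I {} \<subseteq> GG" by simp
        then show ?thesis unfolding F0_def using G_DS
          by (intro CollectI conjI exI[of _ "{}"]) auto
      qed
      show "{} \<notin> F0"
      proof
        assume "{} \<in> F0"
        then obtain F where F: "finite F" "F \<subseteq> ?D" "?I F \<subseteq> {}" unfolding F0_def by blast
        have "?I F \<noteq> {}" by (rule ne[OF F(1) F(2)])
        then show False using F(3) by (metis subset_empty)
      qed
      show "E1 \<inter> E2 \<in> F0" if h: "E1 \<in> F0" "E2 \<in> F0" for E1 E2
      proof -
        obtain F1 where F1: "finite F1" "F1 \<subseteq> ?D" "?I F1 \<subseteq> E1" and E1: "E1 \<in> DS"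
          using h(1) unfolding F0_def by blast
        obtain F2 where F2: "finite F2" "F2 \<subseteq> ?D" "?I F2 \<subseteq> E2" and E2: "E2 \<in> DS"
          using h(2) unfolding F0_def by blast
        have i: "?I (F1 \<union> F2) \<subseteq> E1 \<inter> E2"
        proof
          fix x assume x: "x \<in> ?I (F1 \<union> F2)"
          then have "x \<in> ?I F1" "x \<in> ?I F2" by blast+
          then show "x \<in> E1 \<inter> E2" using F1(3) F2(3) by blast
        qed
        have d: "E1 \<inter> E2 \<in> DS" using DS_Int E1 E2 by blast
        have f: "finite (F1 \<union> F2)" "F1 \<union> F2 \<subseteq> ?D" using F1(1,2) F2(1,2) by auto
        have "E1 \<inter> E2 \<in> DS \<and> (\<exists>F. finite F \<and> F \<subseteq> ?D \<and> ?I F \<subseteq> E1 \<inter> E2)"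
          using i d f by blast
        then show ?thesis unfolding F0_def mem_Collect_eq .
      qed
      show "E2 \<in> F0" if h: "E1 \<in> F0" "E2 \<in> DS" "E1 \<subseteq> E2" for E1 E2
      proof -
        obtain F1 where F1: "finite F1" "F1 \<subseteq> ?D" "?I F1 \<subseteq> E1"
          using h(1) unfolding F0_def by blast
        have "?I F1 \<subseteq> E2" using F1(3) h(3) by (rule subset_trans)
        then show ?thesis unfolding F0_def using F1 h(2) by (intro CollectI conjI exI[of _ F1]) auto
      qed
    qed
    then obtain p where p: "p \<in> SGG" "F0 \<subseteq> p" using ultra by blast
    then obtain D where D: "D \<in> ?D" "D \<in> p" using cov by blast
    have "GG - D \<in> DS" "?I {D} \<subseteq> GG - D" "{D} \<subseteq> ?D" using D DS_Diff by auto
    then have "GG - D \<in> F0" unfolding F0_def by blast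
    then have "GG - D \<in> p" using p by blast
    moreover have "D \<in> DS" using D by blast
    ultimately show False using SG_compl[OF p(1)] D(2) by blast
  qed
  then obtain F where F: "finite F" "F \<subseteq> ?D" "\<forall>p\<in>SGG. \<exists>D\<in>F. D \<in> p" by blast
  then have "\<forall>D\<in>F. \<exists>u. u \<in> U \<and> basic D \<subseteq> u" by blast
  then obtain ch where ch: "\<forall>D\<in>F. ch D \<in> U \<and> basic D \<subseteq> ch D" by (rule bchoice[THEN exE]) blast
  show "\<exists>\<F>. finite \<F> \<and> \<F> \<subseteq> U \<and> SGG \<subseteq> \<Union>\<F>"
  proof (intro exI[of _ "ch ` F"] conjI)
    show "finite (ch ` F)" using F by simp
    show "ch ` F \<subseteq> U" using ch by blast
    show "SGG \<subseteq> \<Union>(ch ` F)"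
    proof
      fix p assume p: "p \<in> SGG"
      then obtain D where "D \<in> F" "D \<in> p" using F by blast
      then show "p \<in> \<Union>(ch ` F)" using ch p by (auto simp: basic_def)
    qed
  qed
qed

lemma sep:
  assumes C1: "closedin TOP C1" and C2: "closedin TOP C2" and dj: "C1 \<inter> C2 = {}"
  shows "\<exists>E\<in>DS. C1 \<subseteq> basic E \<and> basic E \<inter> C2 = {}"
proof -
  have cC1: "compactin TOP C1" using closedin_compact_space[OF compact_TOP C1] .
  let ?D = "{D \<in> DS. basic D \<inter> C2 = {}}"
  have op: "openin TOP (topspace TOP - C2)" using C2 by (simp add: closedin_def)
  have cov: "C1 \<subseteq> \<Union>(basic ` ?D)"
  proof
    fix p assume p: "p \<in> C1"
    then have "p \<in> topspace TOP - C2" using dj closedin_subset[OF C1] by blast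
    then obtain D where "D \<in> DS" "p \<in> basic D" "basic D \<subseteq> topspace TOP - C2"
      using open_basic[OF op] by blast
    then show "p \<in> \<Union>(basic ` ?D)" by blast
  qed
  have opn: "\<forall>u\<in>basic ` ?D. openin TOP u" using basic_open by blast
  have cpt: "\<forall>U. (\<forall>u\<in>U. openin TOP u) \<and> C1 \<subseteq> \<Union>U \<longrightarrow> (\<exists>F. finite F \<and> F \<subseteq> U \<and> C1 \<subseteq> \<Union>F)"
    using cC1 unfolding compactin_def by blast
  have "(\<forall>u\<in>basic ` ?D. openin TOP u) \<and> C1 \<subseteq> \<Union>(basic ` ?D) \<longrightarrow>
      (\<exists>F. finite F \<and> F \<subseteq> basic ` ?D \<and> C1 \<subseteq> \<Union>F)"
    by (rule spec[OF cpt])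
  then have "\<exists>F. finite F \<and> F \<subseteq> basic ` ?D \<and> C1 \<subseteq> \<Union>F" using opn cov by blast
  then obtain F where F: "finite F" "F \<subseteq> basic ` ?D" "C1 \<subseteq> \<Union>F" by blast
  obtain D' where D': "D' \<subseteq> ?D" "finite D'" "F = basic ` D'"
    using finite_subset_image[OF F(1) F(2)] by blast
  have E: "\<Union>D' \<in> DS" using D' DS_Union by blast
  show ?thesis
  proof (intro bexI[OF _ E] conjI)
    show "C1 \<subseteq> basic (\<Union>D')"
    proof
      fix p assume "p \<in> C1"
      then obtain D where D: "D \<in> D'" "p \<in> basic D" using F D' by blast
      then show "p \<in> basic (\<Union>D')" using SG_D(5)[of p D "\<Union>D'"] E by (auto simp: basic_def)
    qed
    show "basic (\<Union>D') \<inter> C2 = {}"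
    proof (rule ccontr)
      assume "basic (\<Union>D') \<inter> C2 \<noteq> {}"
      then obtain q where q: "q \<in> SGG" "\<Union>D' \<in> q" "q \<in> C2" by (auto simp: basic_def)
      then obtain D where "D \<in> D'" "D \<in> q" using SG_Union[OF q(1) D'(2)] D'(1) by blast
      then show False using q D'(1) by (auto simp: basic_def)
    qed
  qed
qed

lemma defmap_SG:
  assumes p: "p \<in> SGG" and pd: "type_definable FI RI k GG p"
  shows "definable_map FI RI k GG TOP (\<lambda>g. act g p)"
  unfolding definable_map_def
proof (intro allI impI)
  fix C1 C2 assume a: "closedin TOP C1 \<and> closedin TOP C2 \<and> C1 \<inter> C2 = {}"
  then obtain E where E: "E \<in> DS" "C1 \<subseteq> basic E" "basic E \<inter> C2 = {}" using sep[of C1 C2] a by blast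
  define Y where "Y = {g \<in> GG. {x \<in> GG. g \<otimes>\<^bsub>Gr\<^esub> x \<in> E} \<in> p}"
  have Edef: "definable_set FI RI k E" using E by (simp add: def_subsets_def)
  obtain \<psi> c where f: "fv \<psi> \<subseteq> {..<k + (k + length c)}"
    and s: "\<forall>x g. length x = k \<longrightarrow> length g = k \<longrightarrow>
        (sat FI RI (\<lambda>i. (x @ g @ c) ! i) \<psi> \<longleftrightarrow> x \<in> GG \<and> g \<in> GG \<and> g \<otimes>\<^bsub>Gr\<^esub> x \<in> E)"
    using transl[OF Edef] by auto
  define S where "S = {b. length b = k + length c \<and> {a \<in> GG. sat FI RI (\<lambda>i. (a @ b) ! i) \<psi>} \<in> p}"
  have "definable_set FI RI (k + length c) S"
    unfolding S_def by (rule pd[unfolded type_definable_def, rule_format, OF f])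
  then have "definable_set FI RI k {g. length g = k \<and> g @ c \<in> S}"
    by (rule def_set_fix) simp
  then have Ydef: "definable_set FI RI k (GG \<inter> {g. length g = k \<and> g @ c \<in> S})"
    by (rule def_set_Int[OF G_def])
  have "Y = GG \<inter> {g. length g = k \<and> g @ c \<in> S}"
  proof -
    have "{a \<in> GG. sat FI RI (\<lambda>i. (a @ g @ c) ! i) \<psi>} = {x \<in> GG. g \<otimes>\<^bsub>Gr\<^esub> x \<in> E}" if gG: "g \<in> GG" for g
    proof -
      have "sat FI RI (\<lambda>i. (a @ g @ c) ! i) \<psi> \<longleftrightarrow> g \<otimes>\<^bsub>Gr\<^esub> a \<in> E" if aG: "a \<in> GG" for a
      proof -
        have "length a = k" "length g = k" using G_len aG gG by auto
        then show ?thesis using s aG gG by blast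
      qed
      then show ?thesis by (intro Collect_cong) blast
    qed
    note eq = this
    show ?thesis
    proof (rule equalityI; rule subsetI)
      fix g assume "g \<in> Y"
      then have gG: "g \<in> GG" and P: "{x \<in> GG. g \<otimes>\<^bsub>Gr\<^esub> x \<in> E} \<in> p" by (simp_all add: Y_def)
      show "g \<in> GG \<inter> {g. length g = k \<and> g @ c \<in> S}"
        using eq[OF gG] G_len[OF gG] gG P by (simp add: S_def)
    next
      fix g assume "g \<in> GG \<inter> {g. length g = k \<and> g @ c \<in> S}"
      then have gG: "g \<in> GG" and P: "g @ c \<in> S" by simp_all
      show "g \<in> Y" using eq[OF gG] G_len[OF gG] gG P by (simp add: S_def Y_def)
    qed
  qed
  then have Yd: "definable_set FI RI k Y" using Ydef by simp
  show "\<exists>Y. Y \<subseteq> GG \<and> definable_set FI RI k Y \<and> {g \<in> GG. act g p \<in> C1} \<subseteq> Y \<and>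
             Y \<inter> {g \<in> GG. act g p \<in> C2} = {}"
  proof (intro exI[of _ Y] conjI)
    show "Y \<subseteq> GG" by (auto simp: Y_def)
    show "definable_set FI RI k Y" by (fact Yd)
    show "{g \<in> GG. act g p \<in> C1} \<subseteq> Y"
      using E(2) by (auto simp: Y_def basic_def type_act_def)
    show "Y \<inter> {g \<in> GG. act g p \<in> C2} = {}"
    proof (rule ccontr)
      assume "Y \<inter> {g \<in> GG. act g p \<in> C2} \<noteq> {}"
      then obtain g where g: "g \<in> GG" "{x \<in> GG. g \<otimes>\<^bsub>Gr\<^esub> x \<in> E} \<in> p" "act g p \<in> C2"
        by (auto simp: Y_def)
      then have "act g p \<in> basic E" using E(1) act_SG[OF g(1) p] by (auto simp: basic_def type_act_def)
      then show False using E(3) g(3) by blast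
    qed
  qed
qed

lemma ambit_SG:
  assumes defb: "\<forall>p \<in> SGG. type_definable FI RI k GG p"
  shows "definable_ambit FI RI k Gr TOP act (tpp \<one>\<^bsub>Gr\<^esub>)"
proof -
  have one: "\<one>\<^bsub>Gr\<^esub> \<in> GG" using grp by (simp add: group.is_monoid monoid.one_closed)
  have img: "(\<lambda>g. act g (tpp \<one>\<^bsub>Gr\<^esub>)) ` GG = tpp ` GG" using act_tp by auto
  have cl: "TOP closure_of (tpp ` GG) = SGG"
  proof
    show "TOP closure_of (tpp ` GG) \<subseteq> SGG" using closure_of_subset_topspace topspace_TOP by metis
    show "SGG \<subseteq> TOP closure_of (tpp ` GG)"
    proof
      fix p assume p: "p \<in> SGG"
      show "p \<in> TOP closure_of (tpp ` GG)"
        unfolding in_closure_of topspace_TOP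
      proof (intro conjI allI impI)
        show "p \<in> SGG" by (fact p)
        fix T assume T: "p \<in> T \<and> openin TOP T"
        then obtain D where D: "D \<in> DS" "p \<in> basic D" "basic D \<subseteq> T" using open_basic by blast
        then have "D \<noteq> {}" using SG_D(3)[OF p] by (auto simp: basic_def)
        then obtain g where g: "g \<in> D" by blast
        then have gG: "g \<in> GG" using DS_sub D by blast
        have "tpp g \<in> basic D" using tp_SG[OF gG] D g by (auto simp: basic_def tp_def)
        then show "\<exists>y. y \<in> tpp ` GG \<and> y \<in> T" using gG D by blast
      qed
    qed
  qed
  have f1: "\<forall>g\<in>GG. homeomorphic_map TOP TOP (act g)" using act_homeo by blast
  have f2: "\<forall>x\<in>SGG. act \<one>\<^bsub>Gr\<^esub> x = x" using act_one by blast
  have f3: "\<forall>g\<in>GG. \<forall>h\<in>GG. \<forall>x\<in>SGG. act (g \<otimes>\<^bsub>Gr\<^esub> h) x = act g (act h x)" using act_mult by blast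
  have f4: "\<forall>x\<in>SGG. definable_map FI RI k GG TOP (\<lambda>g. act g x)" using defmap_SG defb by blast
  show ?thesis
    unfolding definable_ambit_def definable_flow_def topspace_TOP img cl
    using compact_TOP Hausdorff_TOP f1 f2 f3 f4 tp_SG[OF one]
    by (intro conjI refl)
qed

end



locale amb = dg FI RI k Gr
  for FI :: "'f \<Rightarrow> 'm list \<Rightarrow> 'm" and RI :: "'r \<Rightarrow> 'm list \<Rightarrow> bool"
    and k :: nat and Gr :: "('m list, 'z) monoid_scheme" +
  fixes X :: "'x topology" and \<alpha> :: "'m list \<Rightarrow> 'x \<Rightarrow> 'x" and x0 :: 'x
  assumes A: "definable_ambit FI RI k Gr X \<alpha> x0"
begin

definition "f g = \<alpha> g x0"
definition "hmap p = (THE x. x \<in> topspace X \<and> (\<forall>D\<in>p. x \<in> X closure_of (f ` D)))"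

lemma flow: "definable_flow FI RI k Gr X \<alpha>" and x0: "x0 \<in> topspace X"
  and dense: "X closure_of ((\<lambda>g. \<alpha> g x0) ` GG) = topspace X"
  using A by (simp_all add: definable_ambit_def)

lemma cX: "compact_space X" using flow by (simp add: definable_flow_def)
lemma hX: "Hausdorff_space X" using flow by (simp add: definable_flow_def)
lemma homeo: "g \<in> GG \<Longrightarrow> homeomorphic_map X X (\<alpha> g)" using flow by (simp add: definable_flow_def)
lemma a_mult: "g \<in> GG \<Longrightarrow> h \<in> GG \<Longrightarrow> x \<in> topspace X \<Longrightarrow> \<alpha> (g \<otimes>\<^bsub>Gr\<^esub> h) x = \<alpha> g (\<alpha> h x)"
  using flow by (simp add: definable_flow_def)
lemma a_one: "x \<in> topspace X \<Longrightarrow> \<alpha> \<one>\<^bsub>Gr\<^esub> x = x" using flow by (simp add: definable_flow_def)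
lemma dm: "x \<in> topspace X \<Longrightarrow> definable_map FI RI k GG X (\<lambda>g. \<alpha> g x)" using flow by (simp add: definable_flow_def)

lemma regX: "regular_space X" using compact_Hausdorff_imp_regular_space cX hX by blast

lemma f_top: "g \<in> GG \<Longrightarrow> f g \<in> topspace X"
  using homeomorphic_imp_surjective_map[OF homeo] x0 unfolding f_def by blast

lemma fD_top: "D \<in> DS \<Longrightarrow> f ` D \<subseteq> topspace X"
  using f_top DS_sub by blast

lemma shrink:
  assumes W: "openin X W" and x: "x \<in> W"
  shows "\<exists>U. openin X U \<and> x \<in> U \<and> X closure_of U \<subseteq> W"
proof -
  have "closedin X (topspace X - W)" using W by blast
  moreover have "x \<in> topspace X - (topspace X - W)" using x openin_subset[OF W] by blast
  ultimately obtain U where "openin X U" "x \<in> U" "disjnt (topspace X - W) (X closure_of U)"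
    using regX unfolding regular_space by blast
  moreover have "X closure_of U \<subseteq> topspace X" by (rule closure_of_subset_topspace)
  ultimately show ?thesis unfolding disjnt_def by blast
qed

lemma sepY:
  assumes "closedin X C1" "closedin X C2" "C1 \<inter> C2 = {}"
  shows "\<exists>Y\<in>DS. {g \<in> GG. f g \<in> C1} \<subseteq> Y \<and> Y \<inter> {g \<in> GG. f g \<in> C2} = {}"
proof -
  have dmf: "definable_map FI RI k GG X f" using dm[OF x0] by (simp add: f_def[abs_def])
  have "\<exists>Y. Y \<subseteq> GG \<and> definable_set FI RI k Y \<and> {g \<in> GG. f g \<in> C1} \<subseteq> Y \<and>
      Y \<inter> {g \<in> GG. f g \<in> C2} = {}"
    using dmf[unfolded definable_map_def, rule_format, of C1 C2] assms by blast
  then obtain Y where "Y \<subseteq> GG" "definable_set FI RI k Y" "{g \<in> GG. f g \<in> C1} \<subseteq> Y"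
      "Y \<inter> {g \<in> GG. f g \<in> C2} = {}" by blast
  then show ?thesis using DS_defI by blast
qed

lemma exist:
  assumes p: "p \<in> SGG"
  shows "\<exists>x. x \<in> topspace X \<and> (\<forall>D\<in>p. x \<in> X closure_of (f ` D))"
proof -
  let ?U = "(\<lambda>D. X closure_of (f ` D)) ` p"
  have cl: "\<forall>C\<in>?U. closedin X C" by auto
  have fip: "\<forall>F. finite F \<and> F \<subseteq> ?U \<longrightarrow> \<Inter>F \<noteq> {}"
  proof (intro allI impI)
    fix F assume F: "finite F \<and> F \<subseteq> ?U"
    have "\<exists>C\<subseteq>p. finite C \<and> F = (\<lambda>D. X closure_of (f ` D)) ` C"
      using finite_subset_image[of F "\<lambda>D. X closure_of (f ` D)" p] F by blast
    then obtain F' where F': "F' \<subseteq> p" "finite F'" "F = (\<lambda>D. X closure_of (f ` D)) ` F'"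
      by blast
    have "GG \<inter> \<Inter>F' \<in> p" using SG_Inter[OF p F'(2) F'(1)] .
    then have "GG \<inter> \<Inter>F' \<noteq> {}" using SG_D(3)[OF p] by metis
    then obtain g where g: "g \<in> GG" "\<forall>D\<in>F'. g \<in> D" by blast
    have fgD: "f g \<in> X closure_of (f ` D)" if DF: "D \<in> F'" for D
    proof -
      have DDS: "D \<in> DS" using subsetD[OF SG_D(1)[OF p] subsetD[OF F'(1) DF]] .
      have sub: "f ` D \<subseteq> X closure_of (f ` D)" by (rule closure_of_subset[OF fD_top[OF DDS]])
      have "g \<in> D" using g(2) DF by blast
      then have "f g \<in> f ` D" by (rule imageI)
      then show ?thesis using sub by (rule subsetD[rotated])
    qed
    have "f g \<in> \<Inter>F" unfolding F'(3) by (rule INT_I) (rule fgD)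
    then show "\<Inter>F \<noteq> {}" by blast
  qed
  have "(\<forall>C\<in>?U. closedin X C) \<and> (\<forall>F. finite F \<and> F \<subseteq> ?U \<longrightarrow> \<Inter>F \<noteq> {}) \<longrightarrow> \<Inter>?U \<noteq> {}"
    using cX[unfolded compact_space_fip] by (rule spec)
  then have "\<Inter>?U \<noteq> {}" using cl fip by blast
  then obtain x where x: "x \<in> \<Inter>?U" by blast
  have "x \<in> X closure_of (f ` GG)" using x SG_D(2)[OF p] by blast
  then have "x \<in> topspace X" by (rule subsetD[OF closure_of_subset_topspace])
  then show ?thesis using x by blast
qed

lemma uniq:
  assumes p: "p \<in> SGG" and x: "x \<in> topspace X" "\<forall>D\<in>p. x \<in> X closure_of (f ` D)"
    and y: "y \<in> topspace X" "\<forall>D\<in>p. y \<in> X closure_of (f ` D)"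
  shows "x = y"
proof (rule ccontr)
  assume ne: "x \<noteq> y"
  obtain U0 V0 where UV0: "openin X U0" "openin X V0" "x \<in> U0" "y \<in> V0" "disjnt U0 V0"
    using hX x(1) y(1) ne unfolding Hausdorff_space_def by blast
  obtain U where U: "openin X U" "x \<in> U" "X closure_of U \<subseteq> U0" using shrink UV0 by blast
  obtain V where V: "openin X V" "y \<in> V" "X closure_of V \<subseteq> V0" using shrink UV0 by blast
  have dj: "X closure_of U \<inter> X closure_of V = {}" using U(3) V(3) UV0(5) by (auto simp: disjnt_def)
  obtain Y where Y: "Y \<in> DS" "{g \<in> GG. f g \<in> X closure_of U} \<subseteq> Y"
      "Y \<inter> {g \<in> GG. f g \<in> X closure_of V} = {}"
    using sepY[OF closedin_closure_of closedin_closure_of dj] by blast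
  have Usub: "U \<subseteq> X closure_of U" using closure_of_subset openin_subset[OF U(1)] by blast
  have Vsub: "V \<subseteq> X closure_of V" using closure_of_subset openin_subset[OF V(1)] by blast
  show False
  proof (cases "Y \<in> p")
    case True
    have "V \<inter> f ` Y = {}" using Y(3) Vsub DS_sub[OF Y(1)] by blast
    then have "V \<inter> X closure_of (f ` Y) = {}" using openin_Int_closure_of_eq_empty[OF V(1)] by blast
    then show False using y(2) True V(2) by blast
  next
    case False
    then have "GG - Y \<in> p" using SG_compl[OF p Y(1)] by blast
    have "U \<inter> f ` (GG - Y) = {}" using Y(2) Usub by blast
    then have "U \<inter> X closure_of (f ` (GG - Y)) = {}" using openin_Int_closure_of_eq_empty[OF U(1)] by blast
    then show False using x(2) \<open>GG - Y \<in> p\<close> U(2) by blast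
  qed
qed

lemma hmap: assumes p: "p \<in> SGG"
  shows "hmap p \<in> topspace X \<and> (\<forall>D\<in>p. hmap p \<in> X closure_of (f ` D))"
proof -
  have "\<exists>!x. x \<in> topspace X \<and> (\<forall>D\<in>p. x \<in> X closure_of (f ` D))"
    using exist[OF p] uniq[OF p] by blast
  then show ?thesis unfolding hmap_def by (rule theI')
qed

lemma hchar: assumes p: "p \<in> SGG" and "x \<in> topspace X" "\<forall>D\<in>p. x \<in> X closure_of (f ` D)"
  shows "hmap p = x"
  using uniq[OF p _ _ assms(2,3)] hmap[OF p] by blast

lemma h_tp: assumes g: "g \<in> GG" shows "hmap (tpp g) = f g"
proof (rule hchar[OF tp_SG[OF g] f_top[OF g]])
  show "\<forall>D\<in>tpp g. f g \<in> X closure_of (f ` D)"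
  proof
    fix D assume "D \<in> tpp g"
    then have D: "D \<in> DS" "g \<in> D" by (auto simp: tp_def)
    then show "f g \<in> X closure_of (f ` D)" using closure_of_subset[OF fD_top[OF D(1)]] by blast
  qed
qed

lemma h_cont: "continuous_map TOP X hmap"
  unfolding continuous_map_def topspace_TOP
proof (intro conjI allI impI)
  show "hmap \<in> SGG \<rightarrow> topspace X" using hmap by blast
  fix W assume W: "openin X W"
  show "openin TOP {p \<in> SGG. hmap p \<in> W}"
  proof (subst openin_subopen, intro ballI)
    fix p assume pW: "p \<in> {p \<in> SGG. hmap p \<in> W}"
    then have p: "p \<in> SGG" and hW: "hmap p \<in> W" by auto
    obtain U where U: "openin X U" "hmap p \<in> U" "X closure_of U \<subseteq> W" using shrink[OF W hW] by blast
    obtain U2 where U2: "openin X U2" "hmap p \<in> U2" "X closure_of U2 \<subseteq> U" using shrink[OF U(1,2)] by blast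
    have c1: "closedin X (topspace X - U)" using U(1) by blast
    have dj: "(topspace X - U) \<inter> X closure_of U2 = {}" using U2(3) by blast
    obtain Y where Y: "Y \<in> DS" "{g \<in> GG. f g \<in> topspace X - U} \<subseteq> Y"
        "Y \<inter> {g \<in> GG. f g \<in> X closure_of U2} = {}"
      using sepY[OF c1 closedin_closure_of dj] by blast
    have U2sub: "U2 \<subseteq> X closure_of U2" using closure_of_subset openin_subset[OF U2(1)] by blast
    have Dp: "GG - Y \<in> p"
    proof (rule ccontr)
      assume "GG - Y \<notin> p"
      then have "Y \<in> p" using SG_compl[OF p Y(1)] by blast
      have "U2 \<inter> f ` Y = {}" using Y(3) U2sub DS_sub[OF Y(1)] by blast
      then have "U2 \<inter> X closure_of (f ` Y) = {}" using openin_Int_closure_of_eq_empty[OF U2(1)] by blast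
      then show False using hmap[OF p] \<open>Y \<in> p\<close> U2(2) by blast
    qed
    have fDU: "f ` (GG - Y) \<subseteq> U" using Y(2) f_top by blast
    have sub: "basic (GG - Y) \<subseteq> {p \<in> SGG. hmap p \<in> W}"
    proof
      fix q assume "q \<in> basic (GG - Y)"
      then have q: "q \<in> SGG" "GG - Y \<in> q" by (auto simp: basic_def)
      then have "hmap q \<in> X closure_of (f ` (GG - Y))" using hmap by blast
      also have "\<dots> \<subseteq> X closure_of U" using fDU by (rule closure_of_mono)
      finally show "q \<in> {p \<in> SGG. hmap p \<in> W}" using U(3) q(1) by blast
    qed
    show "\<exists>T. openin TOP T \<and> p \<in> T \<and> T \<subseteq> {p \<in> SGG. hmap p \<in> W}"
      using basic_open[OF DS_Diff[OF Y(1)]] sub p Dp by (intro exI[of _ "basic (GG - Y)"]) (auto simp: basic_def)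
  qed
qed

lemma h_equiv: assumes g: "g \<in> GG" and p: "p \<in> SGG"
  shows "hmap (act g p) = \<alpha> g (hmap p)"
proof (rule hchar[OF act_SG[OF g p]])
  have hp: "hmap p \<in> topspace X" using hmap[OF p] by blast
  show "\<alpha> g (hmap p) \<in> topspace X" using homeomorphic_imp_surjective_map[OF homeo[OF g]] hp by blast
  show "\<forall>D\<in>act g p. \<alpha> g (hmap p) \<in> X closure_of (f ` D)"
  proof
    fix D assume "D \<in> act g p"
    then have D: "D \<in> DS" and E: "{x \<in> GG. g \<otimes>\<^bsub>Gr\<^esub> x \<in> D} \<in> p" by (auto simp: type_act_def)
    let ?E = "{x \<in> GG. g \<otimes>\<^bsub>Gr\<^esub> x \<in> D}"
    have EDS: "?E \<in> DS" using transl_DS[OF g D] .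
    have "hmap p \<in> X closure_of (f ` ?E)" using hmap[OF p] E by blast
    then have "\<alpha> g (hmap p) \<in> \<alpha> g ` (X closure_of (f ` ?E))" by blast
    also have "\<dots> = X closure_of (\<alpha> g ` f ` ?E)"
      using homeomorphic_map_closure_of[OF homeo[OF g] fD_top[OF EDS]] by simp
    also have "\<dots> \<subseteq> X closure_of (f ` D)"
    proof (rule closure_of_mono)
      show "\<alpha> g ` f ` ?E \<subseteq> f ` D"
      proof
        fix y assume "y \<in> \<alpha> g ` f ` ?E"
        then obtain x where x: "x \<in> GG" "g \<otimes>\<^bsub>Gr\<^esub> x \<in> D" "y = \<alpha> g (f x)" by blast
        then have "y = f (g \<otimes>\<^bsub>Gr\<^esub> x)" using a_mult[OF g x(1) x0] by (simp add: f_def)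
        then show "y \<in> f ` D" using x(2) by blast
      qed
    qed
    finally show "\<alpha> g (hmap p) \<in> X closure_of (f ` D)" .
  qed
qed

lemma h_surj: "hmap ` SGG = topspace X"
proof
  show "hmap ` SGG \<subseteq> topspace X" using hmap by blast
  have "compactin TOP SGG" using compact_TOP unfolding compact_space_def topspace_TOP .
  then have "compactin X (hmap ` SGG)" using image_compactin h_cont by blast
  then have cl: "closedin X (hmap ` SGG)" using compactin_imp_closedin hX by blast
  have "(\<lambda>g. \<alpha> g x0) ` GG \<subseteq> hmap ` SGG"
  proof
    fix y assume "y \<in> (\<lambda>g. \<alpha> g x0) ` GG"
    then obtain g where g: "g \<in> GG" "y = f g" by (auto simp: f_def)
    then have "y = hmap (tpp g)" using h_tp by simp
    then show "y \<in> hmap ` SGG" using tp_SG[OF g(1)] by blast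
  qed
  then have "X closure_of ((\<lambda>g. \<alpha> g x0) ` GG) \<subseteq> hmap ` SGG" using closure_of_minimal cl by blast
  then show "topspace X \<subseteq> hmap ` SGG" using dense by simp
qed

lemma h_one: "hmap (tpp \<one>\<^bsub>Gr\<^esub>) = x0"
proof -
  have one: "\<one>\<^bsub>Gr\<^esub> \<in> GG" using grp by (simp add: group.is_monoid monoid.one_closed)
  show ?thesis using h_tp[OF one] a_one[OF x0] by (simp add: f_def)
qed

lemma h_unique:
  assumes c: "continuous_map TOP X h'"
    and e: "\<forall>g\<in>GG. \<forall>p\<in>SGG. h' (act g p) = \<alpha> g (h' p)"
    and o: "h' (tpp \<one>\<^bsub>Gr\<^esub>) = x0"
  shows "\<forall>p\<in>SGG. h' p = hmap p"
proof
  have one: "\<one>\<^bsub>Gr\<^esub> \<in> GG" using grp by (simp add: group.is_monoid monoid.one_closed)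
  have tpg: "h' (tpp g) = hmap (tpp g)" if g: "g \<in> GG" for g
  proof -
    have "h' (tpp g) = h' (act g (tpp \<one>\<^bsub>Gr\<^esub>))" using act_tp[OF g] by simp
    also have "\<dots> = \<alpha> g x0" using e g tp_SG[OF one] o by simp
    finally show ?thesis using h_tp[OF g] by (simp add: f_def)
  qed
  fix p assume p: "p \<in> SGG"
  show "h' p = hmap p"
  proof (rule ccontr)
    assume ne: "h' p \<noteq> hmap p"
    have t1: "h' p \<in> topspace X" using c p continuous_map_image_subset_topspace topspace_TOP by blast
    have t2: "hmap p \<in> topspace X" using hmap[OF p] by blast
    obtain U V where UV: "openin X U" "openin X V" "h' p \<in> U" "hmap p \<in> V" "disjnt U V"
      using hX t1 t2 ne unfolding Hausdorff_space_def by blast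
    have o1: "openin TOP {q \<in> SGG. h' q \<in> U}" using openin_continuous_map_preimage[OF c UV(1)] topspace_TOP by simp
    have o2: "openin TOP {q \<in> SGG. hmap q \<in> V}" using openin_continuous_map_preimage[OF h_cont UV(2)] topspace_TOP by simp
    have "openin TOP ({q \<in> SGG. h' q \<in> U} \<inter> {q \<in> SGG. hmap q \<in> V})" using o1 o2 by blast
    moreover have "p \<in> {q \<in> SGG. h' q \<in> U} \<inter> {q \<in> SGG. hmap q \<in> V}" using p UV by blast
    ultimately obtain D where D: "D \<in> DS" "p \<in> basic D" "basic D \<subseteq> {q \<in> SGG. h' q \<in> U} \<inter> {q \<in> SGG. hmap q \<in> V}"
      using open_basic by blast
    then have "D \<noteq> {}" using SG_D(3)[OF p] by (auto simp: basic_def)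
    then obtain g where g: "g \<in> D" by blast
    then have gG: "g \<in> GG" using DS_sub D by blast
    have "tpp g \<in> basic D" using tp_SG[OF gG] D g by (auto simp: basic_def tp_def)
    then have "h' (tpp g) \<in> U" "hmap (tpp g) \<in> V" using D by blast+
    then show False using tpg[OF gG] UV(5) by (auto simp: disjnt_def)
  qed
qed

end


theorem proposition3p8:
  fixes FI :: "'f \<Rightarrow> 'm list \<Rightarrow> 'm" and RI :: "'r \<Rightarrow> 'm list \<Rightarrow> bool"
    and k :: nat and Gr :: "('m list, 'z) monoid_scheme"
  assumes G: "definable_group FI RI k Gr"
    and defb: "\<forall>p \<in> SG FI RI k (carrier Gr). type_definable FI RI k (carrier Gr) p"
  shows "definable_ambit FI RI k Gr (SG_top FI RI k (carrier Gr))
            (type_act FI RI k Gr) (tp FI RI k (carrier Gr) \<one>\<^bsub>Gr\<^esub>)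
       \<and> (\<forall>(X :: 'x topology) \<alpha> x0. definable_ambit FI RI k Gr X \<alpha> x0 \<longrightarrow> (
           \<exists>h. continuous_map (SG_top FI RI k (carrier Gr)) X h
             \<and> (\<forall>g\<in>carrier Gr. \<forall>p\<in>SG FI RI k (carrier Gr). h (type_act FI RI k Gr g p) = \<alpha> g (h p))
             \<and> h (tp FI RI k (carrier Gr) \<one>\<^bsub>Gr\<^esub>) = x0
             \<and> (\<forall>h'. continuous_map (SG_top FI RI k (carrier Gr)) X h'
                  \<and> (\<forall>g\<in>carrier Gr. \<forall>p\<in>SG FI RI k (carrier Gr). h' (type_act FI RI k Gr g p) = \<alpha> g (h' p))
                  \<and> h' (tp FI RI k (carrier Gr) \<one>\<^bsub>Gr\<^esub>) = x0
                  \<longrightarrow> (\<forall>p\<in>SG FI RI k (carrier Gr). h' p = h p))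
             \<and> h ` SG FI RI k (carrier Gr) = topspace X))"
proof -
  interpret dg FI RI k Gr by unfold_locales (rule G)
  have part1: "definable_ambit FI RI k Gr (SG_top FI RI k (carrier Gr))
            (type_act FI RI k Gr) (tp FI RI k (carrier Gr) \<one>\<^bsub>Gr\<^esub>)"
    using ambit_SG[OF defb] .
  have part2: "\<forall>(X :: 'x topology) \<alpha> x0. definable_ambit FI RI k Gr X \<alpha> x0 \<longrightarrow> (
           \<exists>h. continuous_map (SG_top FI RI k (carrier Gr)) X h
             \<and> (\<forall>g\<in>carrier Gr. \<forall>p\<in>SG FI RI k (carrier Gr). h (type_act FI RI k Gr g p) = \<alpha> g (h p))
             \<and> h (tp FI RI k (carrier Gr) \<one>\<^bsub>Gr\<^esub>) = x0
             \<and> (\<forall>h'. continuous_map (SG_top FI RI k (carrier Gr)) X h'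
                  \<and> (\<forall>g\<in>carrier Gr. \<forall>p\<in>SG FI RI k (carrier Gr). h' (type_act FI RI k Gr g p) = \<alpha> g (h' p))
                  \<and> h' (tp FI RI k (carrier Gr) \<one>\<^bsub>Gr\<^esub>) = x0
                  \<longrightarrow> (\<forall>p\<in>SG FI RI k (carrier Gr). h' p = h p))
             \<and> h ` SG FI RI k (carrier Gr) = topspace X)"
  proof (intro allI impI)
    fix X :: "'x topology" and \<alpha> x0
    assume a: "definable_ambit FI RI k Gr X \<alpha> x0"
    interpret amb FI RI k Gr X \<alpha> x0 by unfold_locales (rule G, rule a)
    have c1: "continuous_map TOP X hmap" by (rule h_cont)
    have c2: "\<forall>g\<in>GG. \<forall>p\<in>SGG. hmap (act g p) = \<alpha> g (hmap p)" using h_equiv by blast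
    have c3: "hmap (tpp \<one>\<^bsub>Gr\<^esub>) = x0" by (rule h_one)
    have c4: "\<forall>h'. continuous_map TOP X h' \<and> (\<forall>g\<in>GG. \<forall>p\<in>SGG. h' (act g p) = \<alpha> g (h' p))
        \<and> h' (tpp \<one>\<^bsub>Gr\<^esub>) = x0 \<longrightarrow> (\<forall>p\<in>SGG. h' p = hmap p)"
      using h_unique by blast
    have c5: "hmap ` SGG = topspace X" by (rule h_surj)
    show "\<exists>h. continuous_map TOP X h
             \<and> (\<forall>g\<in>GG. \<forall>p\<in>SGG. h (act g p) = \<alpha> g (h p))
             \<and> h (tpp \<one>\<^bsub>Gr\<^esub>) = x0
             \<and> (\<forall>h'. continuous_map TOP X h' \<and> (\<forall>g\<in>GG. \<forall>p\<in>SGG. h' (act g p) = \<alpha> g (h' p))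
                  \<and> h' (tpp \<one>\<^bsub>Gr\<^esub>) = x0 \<longrightarrow> (\<forall>p\<in>SGG. h' p = h p))
             \<and> h ` SGG = topspace X"
      by (rule exI[of _ hmap]) (intro conjI c1 c2 c3 c4 c5)
  qed
  show ?thesis using part1 part2 by (rule conjI)
qed

end
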